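(* Let $q$ be a prime power and $\mathcal{L}$ a non-empty set of lines of $\mathrm{PG}(n,q)$ satisfying (Pt), (Pl), (Sd) and (To) (see context). Let $M$ be a subspace of $\mathrm{PG}(n,q)$ and $\ell\in\mathcal{L}\setminus\mathcal{L}_M$. Let $$\mathcal{S}=\{\ell^M\in\mathcal{L}_M : \mathcal{L}_{\langle \ell^M,\ell\rangle}\cap\mathcal{L}_M=\{\ell^M\}\text{ and }\ell^M\cap\ell=\emptyset\}.$$ If $\ell^M_1\in\mathcal{S}$, then $\mathcal{L}_{\langle \ell^M_1,\ell\rangle}$ contains at least $q$ lines not in $\bigcup_{\ell^M_2\in\mathcal{S}\setminus\{\ell^M_1\}}\mathcal{L}_{\langle \ell^M_2,\ell\rangle}$.
   Context: (Pt): every point of $\mathrm{PG}(n,q)$ lies on $0$ or $q+1$ lines of $\mathcal{L}$. (Pl): every plane contains $0$, $1$ or $q+1$ lines of $\mathcal{L}$. (Sd): every solid ($3$-dimensional subspace) contains $0$, $1$, $q+1$ or $2q+1$ lines of $\mathcal{L}$. (To): $|\mathcal{L}|\le q^5+q^4+q^3+q^2+q+1$. For a subspace $W$, $\mathcal{L}_W$ denotes the set of lines of $\mathcal{L}$ contained in $W$; $\langle X,Y\rangle$ denotes the subspace spanned by $X$ and $Y$. *)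

theory Defs
  imports "HOL-Analysis.Analysis"
begin

text \<open>PG(n,q) is modelled as the lattice of (vector) subspaces of 'a^'n, where 'a is a
finite field of order q and CARD('n) = n+1. A projective subspace of projective
dimension k is a vector subspace of dimension k+1.\<close>

definition pg_sub :: "('a::{field,finite}^'n) set \<Rightarrow> bool" where
  "pg_sub W \<longleftrightarrow> vec.subspace W"

definition pg_dim_sub :: "nat \<Rightarrow> ('a::{field,finite}^'n) set \<Rightarrow> bool" where
  "pg_dim_sub k W \<longleftrightarrow> vec.subspace W \<and> vec.dim W = k + 1"

abbreviation "pg_point \<equiv> pg_dim_sub 0"
abbreviation "pg_line \<equiv> pg_dim_sub 1"
abbreviation "pg_plane \<equiv> pg_dim_sub 2"
abbreviation "pg_solid \<equiv> pg_dim_sub 3"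

definition lines_in :: "('a::{field,finite}^'n) set set \<Rightarrow> ('a^'n) set \<Rightarrow> ('a^'n) set set" where
  "lines_in L W = {l \<in> L. l \<subseteq> W}"

definition join :: "('a::{field,finite}^'n) set \<Rightarrow> ('a^'n) set \<Rightarrow> ('a^'n) set" where
  "join X Y = vec.span (X \<union> Y)"

text \<open>Projective disjointness: the vector subspaces meet only in 0.\<close>
definition pg_disjoint :: "('a::{field,finite}^'n) set \<Rightarrow> ('a^'n) set \<Rightarrow> bool" where
  "pg_disjoint X Y \<longleftrightarrow> X \<inter> Y \<subseteq> {0}"

definition prop_Pt :: "('a::{field,finite}^'n) set set \<Rightarrow> bool" where
  "prop_Pt L \<longleftrightarrow> (\<forall>P. pg_point P \<longrightarrow>
     card {l \<in> L. P \<subseteq> l} \<in> {0, CARD('a) + 1})"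

definition prop_Pl :: "('a::{field,finite}^'n) set set \<Rightarrow> bool" where
  "prop_Pl L \<longleftrightarrow> (\<forall>\<pi>. pg_plane \<pi> \<longrightarrow>
     card (lines_in L \<pi>) \<in> {0, 1, CARD('a) + 1})"

definition prop_Sd :: "('a::{field,finite}^'n) set set \<Rightarrow> bool" where
  "prop_Sd L \<longleftrightarrow> (\<forall>S. pg_solid S \<longrightarrow>
     card (lines_in L S) \<in> {0, 1, CARD('a) + 1, 2 * CARD('a) + 1})"

definition prop_To :: "('a::{field,finite}^'n) set set \<Rightarrow> bool" where
  "prop_To L \<longleftrightarrow> (let q = CARD('a) in card L \<le> q^5 + q^4 + q^3 + q^2 + q + 1)"

definition setS :: "('a::{field,finite}^'n) set set \<Rightarrow> ('a^'n) set \<Rightarrow> ('a^'n) set \<Rightarrow> ('a^'n) set set" where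
  "setS L M l0 = {m \<in> lines_in L M.
       lines_in L (join m l0) \<inter> lines_in L M = {m} \<and> pg_disjoint m l0}"

end

theory Submission
  imports Defs
begin

lemma fin_lines: "finite (lines_in (L::('a::{field,finite}^'n) set set) W)"
  by (rule finite_subset[of _ UNIV]) simp_all

lemma sub_eq:
  fixes A B :: "('a::{field,finite}^'n) set"
  assumes "vec.subspace A" "vec.subspace B" "A \<subseteq> B" "vec.dim B \<le> vec.dim A"
  shows "A = B"
  using vec.subspace_dim_equal assms by blast

lemma join_solid:
  fixes a b :: "('a::{field,finite}^'n) set"
  assumes "pg_line a" "pg_line b" "pg_disjoint a b"
  shows "pg_solid (join a b)"
proof -
  have sa: "vec.subspace a" and da: "vec.dim a = 2" using assms(1) by (auto simp: pg_dim_sub_def)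
  have sb: "vec.subspace b" and db: "vec.dim b = 2" using assms(2) by (auto simp: pg_dim_sub_def)
  have "a \<inter> b = {0}" using assms(3) sa sb vec.subspace_0 by (auto simp: pg_disjoint_def)
  hence di: "vec.dim (a \<inter> b) = 0" by simp
  have "join a b = {x + y | x y. x \<in> a \<and> y \<in> b}"
    unfolding join_def vec.span_Un using sa sb vec.span_eq_iff by metis
  moreover have "vec.dim {x + y | x y. x \<in> a \<and> y \<in> b} = 4"
    using vec.dim_sums_Int[OF sa sb] di da db by simp
  ultimately have "vec.dim (join a b) = 4" by simp
  moreover have "vec.subspace (join a b)" unfolding join_def by (rule vec.subspace_span)
  ultimately show ?thesis unfolding pg_dim_sub_def by simp
qed

lemma line_eq:
  fixes x P :: "('a::{field,finite}^'n) set"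
  assumes "pg_line x" "vec.subspace P" "x \<subseteq> P" "vec.dim P \<le> 2"
  shows "x = P"
  using sub_eq[of x P] assms by (auto simp: pg_dim_sub_def)

lemma good_cases:
  fixes L :: "('a::{field,finite}^'n) set set" and P l0 :: "('a^'n) set"
  assumes Pl: "prop_Pl L" and lines: "\<forall>l\<in>L. pg_line l" and l0: "l0 \<in> L"
    and sP: "vec.subspace P" and sub: "l0 \<subseteq> P" and dP: "vec.dim P \<le> 3"
  shows "lines_in L P = {l0} \<or> (pg_plane P \<and> card (lines_in L P) = CARD('a) + 1)"
proof -
  have ll0: "pg_line l0" using lines l0 by blast
  have l0in: "l0 \<in> lines_in L P" using l0 sub by (simp add: lines_in_def)
  have "2 \<le> vec.dim P" using vec.dim_subset[OF sub] ll0 by (simp add: pg_dim_sub_def)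
  show ?thesis
  proof (cases "vec.dim P = 2")
    case True
    have "\<forall>x\<in>lines_in L P. x = l0"
    proof
      fix x assume "x \<in> lines_in L P"
      hence "x = P" "l0 = P" using line_eq[of x P] line_eq[of l0 P] lines sP True sub ll0
        by (auto simp: lines_in_def)
      thus "x = l0" by simp
    qed
    thus ?thesis using l0in by blast
  next
    case False
    hence pl: "pg_plane P" using dP \<open>2 \<le> vec.dim P\<close> sP by (simp add: pg_dim_sub_def)
    hence c: "card (lines_in L P) \<in> {0, 1, CARD('a) + 1}" using Pl by (simp add: prop_Pl_def)
    have "card (lines_in L P) \<noteq> 0" using l0in fin_lines[of L P] by auto
    moreover have "card (lines_in L P) = 1 \<Longrightarrow> lines_in L P = {l0}"
      using l0in by (auto simp: card_1_singleton_iff)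
    ultimately show ?thesis using c pl by auto
  qed
qed

lemma two_rich:
  fixes L :: "('a::{field,finite}^'n) set set" and P P' l0 :: "('a^'n) set"
  assumes lines: "\<forall>l\<in>L. pg_line l" and ll0: "pg_line l0"
    and p: "pg_plane P" and p': "pg_plane P'" and "l0 \<subseteq> P" "l0 \<subseteq> P'" and ne: "P \<noteq> P'"
  shows "lines_in L P \<inter> lines_in L P' \<subseteq> {l0}"
proof
  fix x assume x: "x \<in> lines_in L P \<inter> lines_in L P'"
  define Q where "Q = P \<inter> P'"
  have sQ: "vec.subspace Q" using p p' by (simp add: Q_def pg_dim_sub_def vec.subspace_inter)
  have "vec.dim Q \<le> 3" using vec.dim_subset[of Q P] p by (auto simp: Q_def pg_dim_sub_def)
  moreover have "vec.dim Q \<noteq> 3"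
  proof
    assume "vec.dim Q = 3"
    hence "Q = P" "Q = P'" using sub_eq[of Q P] sub_eq[of Q P'] sQ p p'
      by (auto simp: Q_def pg_dim_sub_def)
    thus False using ne by simp
  qed
  ultimately have "vec.dim Q \<le> 2" by simp
  hence "x = Q" "l0 = Q" using line_eq[of x Q] line_eq[of l0 Q] sQ x lines ll0 assms(5,6)
    by (auto simp: lines_in_def Q_def)
  thus "x \<in> {l0}" by simp
qed

theorem lemma6:
  fixes L :: "('a::{field,finite}^'n) set set"
    and M l0 m1 :: "('a^'n) set"
    and n :: nat
  assumes "CARD('n) = n + 1"
    and "\<forall>l\<in>L. pg_line l"
    and "L \<noteq> {}"
    and "prop_Pt L" "prop_Pl L" "prop_Sd L" "prop_To L"
    and "pg_sub M"
    and "l0 \<in> L - lines_in L M"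
    and "m1 \<in> setS L M l0"
  shows "card (lines_in L (join m1 l0)
           - (\<Union>m2\<in>setS L M l0 - {m1}. lines_in L (join m2 l0))) \<ge> CARD('a)"
proof -
  define q where "q = CARD('a)"
  define S1 where "S1 = join m1 l0"
  define LS1 where "LS1 = lines_in L S1"
  define P where "P m = S1 \<inter> join m l0" for m
  note lines = assms(2)
  have l0: "l0 \<in> L" "\<not> l0 \<subseteq> M" using assms(9) by (auto simp: lines_in_def)
  have ll0: "pg_line l0" using lines l0 by blast
  have m1: "m1 \<in> L" "m1 \<subseteq> M" "LS1 \<inter> lines_in L M = {m1}" "pg_disjoint m1 l0"
    using assms(10) by (auto simp: setS_def lines_in_def LS1_def S1_def)
  have sol: "pg_solid S1" unfolding S1_def using join_solid lines m1 ll0 by blast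
  have l0S1: "l0 \<subseteq> S1" "m1 \<subseteq> S1" unfolding S1_def join_def using vec.span_superset by blast+
  hence inS1: "l0 \<in> LS1" "m1 \<in> LS1" using l0 m1 by (auto simp: LS1_def lines_in_def)
  have ne: "m1 \<noteq> l0" using m1 l0 by auto
  have finS1: "finite LS1" unfolding LS1_def by (rule fin_lines)
  have cS1: "card LS1 \<in> {0, 1, q + 1, 2 * q + 1}" using assms(6) sol
    by (simp add: prop_Sd_def LS1_def q_def)
  have "card {m1, l0} \<le> card LS1" using inS1 finS1 by (intro card_mono) auto
  hence "2 \<le> card LS1" using ne by simp
  hence cS1': "q + 1 \<le> card LS1" "card LS1 \<le> 2 * q + 1" using cS1 by auto
  have good: "lines_in L (P m) = {l0} \<or> (pg_plane (P m) \<and> card (lines_in L (P m)) = q + 1)"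
    and m1P: "m1 \<notin> lines_in L (P m)"
    if m: "m \<in> setS L M l0 - {m1}" for m
  proof -
    have hm: "m \<in> L" "m \<subseteq> M" "lines_in L (join m l0) \<inter> lines_in L M = {m}"
      using m by (auto simp: setS_def lines_in_def)
    have nm1: "\<not> m1 \<subseteq> join m l0"
    proof
      assume "m1 \<subseteq> join m l0"
      hence "m1 \<in> lines_in L (join m l0) \<inter> lines_in L M" using m1 by (auto simp: lines_in_def)
      thus False using hm m by auto
    qed
    thus "m1 \<notin> lines_in L (P m)" by (auto simp: P_def lines_in_def)
    have sP: "vec.subspace (P m)" using sol
      by (simp add: P_def join_def pg_dim_sub_def vec.subspace_inter vec.subspace_span)
    have l0P: "l0 \<subseteq> P m" using l0S1 vec.span_superset[of "m \<union> l0"]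
      by (auto simp: P_def join_def)
    have "vec.dim (P m) \<le> 4" using vec.dim_subset[of "P m" S1] sol by (auto simp: P_def pg_dim_sub_def)
    moreover have "vec.dim (P m) \<noteq> 4"
    proof
      assume "vec.dim (P m) = 4"
      hence "P m = S1" using sub_eq[of "P m" S1] sP sol by (auto simp: P_def pg_dim_sub_def)
      thus False using nm1 l0S1 by (auto simp: P_def)
    qed
    ultimately have "vec.dim (P m) \<le> 3" by simp
    thus "lines_in L (P m) = {l0} \<or> (pg_plane (P m) \<and> card (lines_in L (P m)) = q + 1)"
      using good_cases[OF assms(5) lines l0(1) sP l0P] by (simp add: q_def)
  qed
  have l0Pall: "l0 \<subseteq> P m" for m using l0S1 vec.span_superset[of "m \<union> l0"]
    by (auto simp: P_def join_def)
  define U' where "U' = (\<Union>m\<in>setS L M l0 - {m1}. lines_in L (P m))"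
  have eq: "lines_in L (join m1 l0) - (\<Union>m2\<in>setS L M l0 - {m1}. lines_in L (join m2 l0)) = LS1 - U'"
    by (auto simp: U'_def LS1_def S1_def P_def lines_in_def)
  have sub1: "lines_in L (P m) \<subseteq> LS1" for m by (auto simp: LS1_def P_def lines_in_def)
  show ?thesis
  proof (cases "\<exists>m0\<in>setS L M l0 - {m1}. pg_plane (P m0) \<and> card (lines_in L (P m0)) = q + 1")
    case False
    hence "U' \<subseteq> {l0}" using good by (auto simp: U'_def)
    hence "LS1 - {l0} \<subseteq> LS1 - U'" by auto
    hence "card (LS1 - {l0}) \<le> card (LS1 - U')" using finS1 by (intro card_mono) auto
    moreover have "card (LS1 - {l0}) = card LS1 - 1" using inS1 finS1 by simp
    ultimately show ?thesis using eq cS1' q_def by simp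
  next
    case True
    then obtain m0 where m0: "m0 \<in> setS L M l0 - {m1}" "pg_plane (P m0)"
      "card (lines_in L (P m0)) = q + 1" by blast
    define A where "A = lines_in L (P m0)"
    have finA: "finite A" unfolding A_def by (rule fin_lines)
    have l0P0: "l0 \<subseteq> P m0" by (rule l0Pall)
    have "U' \<subseteq> A"
    proof
      fix x assume "x \<in> U'"
      then obtain m where m: "m \<in> setS L M l0 - {m1}" and x: "x \<in> lines_in L (P m)"
        by (auto simp: U'_def)
      show "x \<in> A"
      proof (cases "lines_in L (P m) = {l0}")
        case True thus ?thesis using x l0 l0P0 by (auto simp: A_def lines_in_def)
      next
        case False
        hence pm: "pg_plane (P m)" "card (lines_in L (P m)) = q + 1" using good[OF m] by auto
        show ?thesis
        proof (cases "P m = P m0")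
          case True thus ?thesis using x by (simp add: A_def)
        next
          case False
          define B where "B = lines_in L (P m)"
          have finB: "finite B" unfolding B_def by (rule fin_lines)
          have l0Pm: "l0 \<subseteq> P m" by (rule l0Pall)
          have "A \<inter> B \<subseteq> {l0}" unfolding A_def B_def
            using two_rich[OF lines ll0 m0(2) pm(1) l0P0 l0Pm] False by auto
          moreover have "l0 \<in> A \<inter> B" using l0 l0P0 l0Pm by (auto simp: A_def B_def lines_in_def)
          ultimately have AB: "A \<inter> B = {l0}" by auto
          have "card (A \<union> B) + card (A \<inter> B) = card A + card B" using card_Un_Int finA finB by metis
          hence cu: "card (A \<union> B) = 2 * q + 1" using AB m0(3) pm(2) by (simp add: A_def B_def)
          have "insert m1 (A \<union> B) \<subseteq> LS1" using sub1 inS1 by (auto simp: A_def B_def)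
          hence "card (insert m1 (A \<union> B)) \<le> card LS1" using finS1 by (intro card_mono) auto
          moreover have "m1 \<notin> A \<union> B" using m1P m m0(1) by (auto simp: A_def B_def)
          ultimately have "2 * q + 2 \<le> card LS1" using cu finA finB by simp
          thus ?thesis using cS1' by simp
        qed
      qed
    qed
    have "insert m1 A \<subseteq> LS1" using sub1 inS1 by (auto simp: A_def)
    hence "card (insert m1 A) \<le> card LS1" using finS1 by (intro card_mono) auto
    moreover have "m1 \<notin> A" using m1P m0(1) by (auto simp: A_def)
    ultimately have "q + 2 \<le> card LS1" using finA m0(3) by (simp add: A_def)
    hence c2: "card LS1 = 2 * q + 1" using cS1 by auto
    have "LS1 - A \<subseteq> LS1 - U'" using \<open>U' \<subseteq> A\<close> by auto
    hence "card (LS1 - A) \<le> card (LS1 - U')" using finS1 by (intro card_mono) auto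
    moreover have "card (LS1 - A) = card LS1 - card A" using sub1 finA
      by (intro card_Diff_subset) (auto simp: A_def)
    ultimately show ?thesis using eq c2 m0(3) q_def by (simp add: A_def)
  qed
qed

end
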